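(* Let $B^n$ be the open unit ball of $\mathbb{R}^n$ and let $u:B^n\to\mathbb{R}$ be a bounded function such that $u-\|\cdot\|^2/a$ is concave on $B^n$ for some $a>0$. Then for each compactly supported non-negative $C^2$ function $g:B^n\to\mathbb{R}$, the product $gu$, extended by zero outside of $B^n$, is semi-concave on $\mathbb{R}^n$.
   Context: A function $w:\mathbb{R}^n\to\mathbb{R}$ is semi-concave if there is $k>0$ such that $x\mapsto w(x)-\|x\|^2/k$ is concave on $\mathbb{R}^n$. *)

theory Defs
  imports "HOL-Analysis.Analysis"
begin

definition semi_concave :: "('a::euclidean_space \<Rightarrow> real) \<Rightarrow> bool" where
  "semi_concave w \<longleftrightarrow> (\<exists>k>0. concave_on UNIV (\<lambda>x. w x - (norm x)^2 / k))"

definition C2_on :: "'a::euclidean_space set \<Rightarrow> ('a \<Rightarrow> real) \<Rightarrow> bool" where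
  "C2_on S g \<longleftrightarrow> (\<exists>(g' :: 'a \<Rightarrow> ('a \<Rightarrow>\<^sub>L real)) (g'' :: 'a \<Rightarrow> ('a \<Rightarrow>\<^sub>L ('a \<Rightarrow>\<^sub>L real))).
      (\<forall>x\<in>S. (g has_derivative blinfun_apply (g' x)) (at x)) \<and>
      (\<forall>x\<in>S. (g' has_derivative blinfun_apply (g'' x)) (at x)) \<and>
      continuous_on S g'')"

end

theory Submission
  imports Defs
begin

lemma concave_from_support:
  fixes h :: "'a::real_vector \<Rightarrow> real"
  assumes "\<And>x. \<exists>L. linear L \<and> (\<forall>y. h y \<le> h x + L (y - x))"
  shows "concave_on UNIV h"
  unfolding concave_on_iff
proof (intro conjI ballI allI impI)
  fix x y :: 'a and u v :: real
  assume uv: "u \<ge> 0" "v \<ge> 0" "u + v = 1"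
  define z where "z = u *\<^sub>R x + v *\<^sub>R y"
  obtain L where L: "linear L" "\<forall>y. h y \<le> h z + L (y - z)" using assms by blast
  have hx: "h x \<le> h z + L x - L z" using L(2)[rule_format, of x] L(1) by (simp add: linear_diff)
  have hy: "h y \<le> h z + L y - L z" using L(2)[rule_format, of y] L(1) by (simp add: linear_diff)
  have Lz: "L z = u * L x + v * L y" unfolding z_def using L(1) by (simp add: linear_add linear_scale)
  have "u * h x + v * h y \<le> u * (h z + L x - L z) + v * (h z + L y - L z)"
    using hx hy uv by (simp add: add_mono mult_left_mono)
  also have "\<dots> = (u + v) * h z + (u * L x + v * L y) - (u + v) * L z"
    by (simp add: algebra_simps)
  also have "\<dots> = h z" using Lz uv(3) by simp
  finally show "u * h x + v * h y \<le> h (u *\<^sub>R x + v *\<^sub>R y)" by (simp add: z_def)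
qed simp

lemma semi_concave_from_quadratic:
  fixes F :: "'a::euclidean_space \<Rightarrow> real"
  assumes C: "C > 0"
    and sup: "\<And>x. \<exists>L. linear L \<and> (\<forall>y. F y \<le> F x + L (y - x) + C * (norm (y - x))^2)"
  shows "semi_concave F"
  unfolding semi_concave_def
proof (intro exI[of _ "1/C"] conjI)
  show "0 < 1 / C" using C by simp
  have "concave_on UNIV (\<lambda>x. F x - C * (norm x)^2)"
  proof (rule concave_from_support)
    fix x
    obtain L where L: "linear L" "\<forall>y. F y \<le> F x + L (y - x) + C * (norm (y - x))^2"
      using sup by blast
    have lin: "linear (\<lambda>d. L d - 2 * C * (x \<bullet> d))"
      using L(1) by (intro linearI) (auto simp: linear_add linear_scale inner_add_right algebra_simps)
    have eq: "(norm (y - x))^2 = (norm y)^2 - 2 * (x \<bullet> (y - x)) - (norm x)^2" for y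
      by (simp add: power2_norm_eq_inner inner_diff_left inner_diff_right inner_commute algebra_simps)
    show "\<exists>L. linear L \<and> (\<forall>y. F y - C * (norm y)\<^sup>2 \<le> F x - C * (norm x)\<^sup>2 + L (y - x))"
    proof (intro exI[of _ "\<lambda>d. L d - 2 * C * (x \<bullet> d)"] conjI lin allI)
      fix y
      have "F y \<le> F x + L (y - x) + C * ((norm y)^2 - 2 * (x \<bullet> (y - x)) - (norm x)^2)"
        using L(2) eq[of y] by metis
      then show "F y - C * (norm y)\<^sup>2 \<le> F x - C * (norm x)\<^sup>2 + (L (y - x) - 2 * C * (x \<bullet> (y - x)))"
        by (simp add: algebra_simps)
    qed
  qed
  then show "concave_on UNIV (\<lambda>x. F x - (norm x)\<^sup>2 / (1 / C))" by (simp add: mult.commute)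
qed

lemma supergradient:
  fixes c :: "'a::euclidean_space \<Rightarrow> real"
  assumes conc: "concave_on S c" and S: "open S" and x0: "x0 \<in> S"
  shows "\<exists>q. \<forall>y\<in>S. c y \<le> c x0 + q \<bullet> (y - x0)"
proof -
  have cvS: "convex S" using conc by (simp add: concave_on_iff)
  define H where "H = {(y, t). y \<in> S \<and> t < c y}"
  have cvH: "convex H"
    unfolding convex_def
  proof (intro ballI allI impI)
    fix p1 p2 :: "'a \<times> real" and u v :: real
    assume p: "p1 \<in> H" "p2 \<in> H" and uv: "0 \<le> u" "0 \<le> v" "u + v = 1"
    obtain y1 t1 y2 t2 where pp: "p1 = (y1, t1)" "p2 = (y2, t2)" by fastforce
    have h: "y1 \<in> S" "t1 < c y1" "y2 \<in> S" "t2 < c y2" using p pp by (auto simp: H_def)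
    have ys: "u *\<^sub>R y1 + v *\<^sub>R y2 \<in> S" using cvS h uv by (simp add: convex_def)
    have cc: "u * c y1 + v * c y2 \<le> c (u *\<^sub>R y1 + v *\<^sub>R y2)"
      using conc h uv by (simp add: concave_on_iff)
    have "u * t1 + v * t2 < u * c y1 + v * c y2"
    proof (cases "u = 0")
      case True then show ?thesis using uv h by simp
    next
      case False then have "u > 0" using uv by simp
      then have "u * t1 < u * c y1" using h by simp
      moreover have "v * t2 \<le> v * c y2" using h uv by (simp add: mult_left_mono)
      ultimately show ?thesis by simp
    qed
    then show "u *\<^sub>R p1 + v *\<^sub>R p2 \<in> H" using ys cc pp by (simp add: H_def)
  qed
  have ne: "H \<noteq> {}" proof
  assume "H = {}"
  moreover have "(x0, c x0 - 1) \<in> H" using x0 by (simp add: H_def)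
  ultimately show False by simp
qed
  have dis: "H \<inter> {(x0, c x0)} = {}" by (auto simp: H_def)
  obtain w b where w: "w \<noteq> 0" "\<forall>z\<in>H. inner w z \<le> b" "\<forall>z\<in>{(x0, c x0)}. inner w z \<ge> b"
    using separating_hyperplane_sets[OF cvH convex_singleton ne _ dis] by blast
  obtain a \<beta> where wab: "w = (a, \<beta>)" by fastforce
  have key: "a \<bullet> y + \<beta> * t \<le> a \<bullet> x0 + \<beta> * c x0" if "y \<in> S" "t < c y" for y t
  proof -
    have "(y, t) \<in> H" using that by (simp add: H_def)
    then have "inner w (y, t) \<le> b" using w by blast
    moreover have "b \<le> inner w (x0, c x0)" using w by simp
    ultimately show ?thesis by (simp add: wab)
  qed
  have "\<beta> \<ge> 0" using key[OF x0, of "c x0 - 1"] by (simp add: right_diff_distrib)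
  moreover have "\<beta> \<noteq> 0"
  proof
    assume b0: "\<beta> = 0"
    then have a0: "a \<noteq> 0" using w wab by (auto simp: zero_prod_def)
    obtain e where e: "e > 0" "ball x0 e \<subseteq> S" using S x0 open_contains_ball by blast
    define y where "y = x0 + (e / 2 / norm a) *\<^sub>R a"
    have "dist x0 y < e" using e a0 by (simp add: y_def dist_norm)
    then have yS: "y \<in> S" using e by auto
    have "a \<bullet> y \<le> a \<bullet> x0" using key[OF yS, of "c y - 1"] b0 by simp
    moreover have "a \<bullet> y = a \<bullet> x0 + e / 2 * norm a"
      using a0 by (simp add: y_def inner_add_right power2_norm_eq_inner[symmetric] power2_eq_square)
    ultimately show False using e a0 by (simp add: mult_le_0_iff)
  qed
  ultimately have bpos: "\<beta> > 0" by simp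
  show ?thesis
  proof (intro exI[of _ "- (1 / \<beta>) *\<^sub>R a"] ballI)
    fix y assume yS: "y \<in> S"
    let ?R = "c x0 + (- (1 / \<beta>) *\<^sub>R a) \<bullet> (y - x0)"
    show "c y \<le> ?R"
    proof (rule ccontr)
      assume "\<not> c y \<le> ?R"
      then have lt: "(c y + ?R) / 2 < c y" by simp
      have "a \<bullet> y + \<beta> * ((c y + ?R) / 2) \<le> a \<bullet> x0 + \<beta> * c x0" using key[OF yS lt] .
      then have "\<beta> * ((c y + ?R) / 2) \<le> \<beta> * ?R"
        using bpos by (simp add: inner_diff_right algebra_simps)
      then have "(c y + ?R) / 2 \<le> ?R" using bpos by (simp only: mult_le_cancel_left_pos)
      moreover have "\<And>A R::real. (A + R) / 2 \<le> R \<Longrightarrow> A \<le> R" by (simp add: field_simps)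
      ultimately show False using \<open>\<not> c y \<le> ?R\<close> by blast
    qed
  qed
qed


theorem lemma5:
  fixes u g :: "'a::euclidean_space \<Rightarrow> real"
  assumes u_bounded: "bounded (u ` ball 0 1)"
    and u_sc: "\<exists>a>0. concave_on (ball 0 1) (\<lambda>x. u x - (norm x)^2 / a)"
    and g_C2: "C2_on (ball 0 1) g"
    and g_nonneg: "\<forall>x\<in>ball 0 1. g x \<ge> 0"
    and g_supp: "\<exists>K. compact K \<and> K \<subseteq> ball 0 1 \<and> (\<forall>x\<in>ball 0 1 - K. g x = 0)"
  shows "semi_concave (\<lambda>x. if x \<in> ball 0 1 then g x * u x else 0)"
proof -
  define F where "F = (\<lambda>x. if x \<in> ball 0 1 then g x * u x else 0)"
  obtain a where a: "a > 0" and conc: "concave_on (ball 0 1) (\<lambda>x. u x - (norm x)^2 / a)"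
    using u_sc by blast
  obtain M where M: "\<forall>x\<in>ball 0 1. norm (u x) \<le> M"
    using u_bounded by (auto simp: bounded_iff)
  have Mabs: "\<bar>u x\<bar> \<le> M" if "x \<in> ball 0 1" for x using M that by auto
  have M0: "M \<ge> 0" using Mabs[of 0] by simp
  obtain K where K: "compact K" "K \<subseteq> ball 0 1" "\<forall>x\<in>ball 0 1 - K. g x = 0"
    using g_supp by blast
  obtain R0 where R0: "0 \<le> R0" "R0 < 1" "\<forall>x\<in>K. norm x \<le> R0"
  proof (cases "K = {}")
    case True then show ?thesis using that[of 0] by auto
  next
    case False
    have "compact (norm ` K)" using K(1) by (intro compact_continuous_image continuous_intros)
    then obtain s where s: "s \<in> norm ` K" "\<forall>t\<in>norm ` K. t \<le> s"
      using compact_attains_sup False by (metis image_is_empty)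
    then obtain k where k: "k \<in> K" "s = norm k" by auto
    have "s < 1" using k K(2) by auto
    then show ?thesis using that[of s] s k by auto
  qed
  define \<delta> where "\<delta> = (1 - R0) / 3"
  define R2 where "R2 = R0 + 2 * \<delta>"
  have \<delta>0: "\<delta> > 0" using R0 by (simp add: \<delta>_def)
  have \<delta>3: "R0 + \<delta> < 1" using R0 by (simp add: \<delta>_def field_simps)
  have \<delta>4: "R0 + 3 * \<delta> = 1" by (simp add: \<delta>_def field_simps)
  have R2: "R2 < 1" "R0 \<le> R2" using R0 by (auto simp: \<delta>_def R2_def field_simps)
  have cb: "cball 0 R2 \<subseteq> ball 0 1" using R2 by (auto simp: subset_iff)
  have gz: "g y = 0" if "y \<in> ball 0 1" "R0 < norm y" for y
    using K R0 that by force
  obtain g' g'' where d1: "\<forall>x\<in>ball 0 1. (g has_derivative blinfun_apply (g' x)) (at x)"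
    and d2: "\<forall>x\<in>ball 0 1. (g' has_derivative blinfun_apply (g'' x)) (at x)"
    and c2: "continuous_on (ball 0 1) g''"
    using g_C2 unfolding C2_on_def by blast
  have cg: "continuous_on (cball 0 R2) g"
    using d1 cb by (meson continuous_at_imp_continuous_on has_derivative_continuous subsetD)
  have cg': "continuous_on (cball 0 R2) g'"
    using d2 cb by (meson continuous_at_imp_continuous_on has_derivative_continuous subsetD)
  have cg'': "continuous_on (cball 0 R2) g''" using c2 cb continuous_on_subset by blast
  have "bounded (g ` cball 0 R2)"
    by (rule compact_imp_bounded[OF compact_continuous_image[OF cg compact_cball]])
  then obtain G where G: "G > 0" "\<forall>x\<in>cball 0 R2. norm (g x) \<le> G" unfolding bounded_pos by auto
  have "bounded (g' ` cball 0 R2)"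
    by (rule compact_imp_bounded[OF compact_continuous_image[OF cg' compact_cball]])
  then obtain G1 where G1: "G1 > 0" "\<forall>x\<in>cball 0 R2. norm (g' x) \<le> G1" unfolding bounded_pos by auto
  have "bounded (g'' ` cball 0 R2)"
    by (rule compact_imp_bounded[OF compact_continuous_image[OF cg'' compact_cball]])
  then obtain G2 where G2: "G2 > 0" "\<forall>x\<in>cball 0 R2. norm (g'' x) \<le> G2" unfolding bounded_pos by auto
  have Fb: "\<bar>F y\<bar> \<le> G * M" for y
  proof (cases "y \<in> ball 0 1")
    case True
    show ?thesis
    proof (cases "norm y \<le> R2")
      case True2: True
      have "\<bar>g y\<bar> \<le> G" using G True2 by auto
      moreover have "\<bar>u y\<bar> \<le> M" using Mabs True by auto
      ultimately have "\<bar>g y\<bar> * \<bar>u y\<bar> \<le> G * M" by (simp add: mult_mono)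
      then show ?thesis using True by (simp add: F_def abs_mult)
    next
      case False
      then have "g y = 0" using gz True R2 by auto
      then show ?thesis using True G M0 by (simp add: F_def)
    qed
  next
    case False then show ?thesis using G M0 by (simp add: F_def)
  qed
  have F0: "F y = 0" if "R0 < norm y" for y using gz that by (simp add: F_def)
  have derw: "(g has_derivative blinfun_apply (g' x)) (at x within S)" if "x \<in> cball 0 R2" for x S
    using d1 cb that by (blast intro: has_derivative_at_withinI)
  have derw': "(g' has_derivative blinfun_apply (g'' x)) (at x within S)" if "x \<in> cball 0 R2" for x S
    using d2 cb that by (blast intro: has_derivative_at_withinI)
  have glip: "\<bar>g y - g x\<bar> \<le> G1 * norm (y - x)" if "x \<in> cball 0 R2" "y \<in> cball 0 R2" for x y
  proof -
    have "norm (g y - g x) \<le> G1 * norm (y - x)"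
      by (rule differentiable_bound[of "cball 0 R2" g "\<lambda>x. blinfun_apply (g' x)"])
         (use derw G1 that in \<open>auto simp: norm_blinfun.rep_eq[symmetric]\<close>)
    then show ?thesis by simp
  qed
  have g'lip: "norm (g' y - g' x) \<le> G2 * norm (y - x)" if "x \<in> cball 0 R2" "y \<in> cball 0 R2" for x y
    by (rule differentiable_bound[of "cball 0 R2" g' "\<lambda>x. blinfun_apply (g'' x)"])
       (use derw' G2 that in \<open>auto simp: norm_blinfun.rep_eq[symmetric]\<close>)
  have taylor: "\<bar>g y - g x - g' x (y - x)\<bar> \<le> G2 * (norm (y - x))^2"
    if x: "x \<in> cball 0 R2" and y: "y \<in> cball 0 R2" for x y
  proof -
    have seg: "closed_segment x y \<subseteq> cball 0 R2" using x y by (simp add: closed_segment_subset)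
    have "norm (g y - g x - g' x (y - x)) \<le> norm (y - x) * (G2 * norm (y - x))"
    proof (rule differentiable_bound_linearization[of x y "closed_segment x y" g "\<lambda>x. blinfun_apply (g' x)" x])
      show "x + t *\<^sub>R (y - x) \<in> closed_segment x y" if "t \<in> {0..1}" for t
        using that unfolding closed_segment_def by (auto intro!: exI[of _ t] simp: algebra_simps)
      show "(g has_derivative blinfun_apply (g' z)) (at z within closed_segment x y)"
        if "z \<in> closed_segment x y" for z using derw seg that by blast
      show "onorm (blinfun_apply (g' z) - blinfun_apply (g' x)) \<le> G2 * norm (y - x)"
        if "z \<in> closed_segment x y" for z
      proof -
        have "onorm (blinfun_apply (g' z) - blinfun_apply (g' x)) = norm (g' z - g' x)"
          by (simp add: norm_blinfun.rep_eq blinfun.diff_left[abs_def] fun_diff_def)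
        also have "\<dots> \<le> G2 * norm (z - x)" using g'lip seg that x by blast
        also have "\<dots> \<le> G2 * norm (y - x)" using segment_bound1[OF that] G2 by simp
        finally show ?thesis .
      qed
      show "x \<in> closed_segment x y" by simp
    qed
    then show ?thesis by (simp add: power2_eq_square mult.commute mult.left_commute)
  qed
  define Q where "Q = (4 * M + \<delta>^2 / (2 * a)) / \<delta>"
  have Q0: "Q \<ge> 0" using M0 a \<delta>0 by (simp add: Q_def)
  have usup: "\<exists>q. norm q \<le> Q \<and> (\<forall>y\<in>ball 0 1. u y \<le> u x + q \<bullet> (y - x) + (norm (y - x))^2 / a)"
    if xn: "norm x < R0 + \<delta>" for x
  proof -
    have xb: "x \<in> ball 0 1" using xn R0 \<delta>3 by simp
    have "\<exists>q0. \<forall>y\<in>ball 0 1. u y - (norm y)^2 / a \<le> u x - (norm x)^2 / a + q0 \<bullet> (y - x)"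
      using supergradient[OF conc open_ball xb] by simp
    then obtain q0 where q0: "\<forall>y\<in>ball 0 1. u y - (norm y)^2 / a \<le> u x - (norm x)^2 / a + q0 \<bullet> (y - x)"
      by blast
    define q where "q = q0 + (2 / a) *\<^sub>R x"
    have sg: "u y \<le> u x + q \<bullet> (y - x) + (norm (y - x))^2 / a" if "y \<in> ball 0 1" for y
    proof -
      have eq: "(norm y)^2 = (norm x)^2 + 2 * (x \<bullet> (y - x)) + (norm (y - x))^2"
        by (simp add: power2_norm_eq_inner inner_diff_left inner_diff_right inner_commute algebra_simps)
      have eq2: "(norm y)^2 / a = (norm x)^2 / a + ((2 / a) *\<^sub>R x) \<bullet> (y - x) + (norm (y - x))^2 / a"
        unfolding eq by (simp add: add_divide_distrib)
      have qq: "q \<bullet> (y - x) = q0 \<bullet> (y - x) + ((2 / a) *\<^sub>R x) \<bullet> (y - x)"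
        by (simp only: q_def inner_add_left)
      have "u y - (norm y)^2 / a \<le> u x - (norm x)^2 / a + q0 \<bullet> (y - x)"
        using q0 that by blast
      then show ?thesis using eq2 qq by linarith
    qed
    have nq: "norm q \<le> Q"
    proof (cases "q = 0")
      case True then show ?thesis using Q0 by simp
    next
      case False
      then have nq0: "norm q > 0" by simp
      define y where "y = x - (\<delta> / (2 * norm q)) *\<^sub>R q"
      have nd: "norm (y - x) = \<delta> / 2" using nq0 \<delta>0 by (simp add: y_def)
      have "norm y \<le> norm x + norm (y - x)" by (metis add_diff_cancel_left' norm_triangle_ineq add.commute diff_add_cancel)
      then have yb: "y \<in> ball 0 1" using nd xn \<delta>4 \<delta>0 by simp
      have qd: "q \<bullet> (y - x) = - (\<delta> / 2) * norm q"
        using nq0 by (simp add: y_def inner_diff_right power2_norm_eq_inner[symmetric] power2_eq_square)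
      have "u y \<le> u x - (\<delta> / 2) * norm q + (\<delta> / 2)^2 / a" using sg[OF yb] nd qd by simp
      moreover have "\<bar>u y\<bar> \<le> M" "\<bar>u x\<bar> \<le> M" using Mabs yb xb by auto
      ultimately have "(\<delta> / 2) * norm q \<le> 2 * M + (\<delta> / 2)^2 / a" by linarith
      have "(\<delta> * norm q) / 2 = (\<delta> / 2) * norm q" by simp
      also have "\<dots> \<le> 2 * M + (\<delta> / 2)^2 / a" by fact
      also have "(\<delta> / 2)^2 / a = (\<delta>^2 / (2 * a)) / 2" by (simp add: power_divide field_simps)
      finally have "(\<delta> * norm q) / 2 \<le> 2 * M + (\<delta>^2 / (2 * a)) / 2" .
      then have "\<delta> * norm q \<le> 4 * M + \<delta>^2 / (2 * a)" by (simp add: divide_le_eq add_divide_distrib algebra_simps)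
      moreover have "\<delta> * Q = 4 * M + \<delta>^2 / (2 * a)" using \<delta>0 by (simp add: Q_def)
      ultimately have "\<delta> * norm q \<le> \<delta> * Q" by simp
      then show ?thesis using \<delta>0 by simp
    qed
    show ?thesis using nq sg by blast
  qed
  define C where "C = 3 * G * M / \<delta>^2 + (G * Q + M * G1) / \<delta> + G1 * Q + G / a + M * G2 + 1"
  have Ct: "0 \<le> 3 * G * M / \<delta>^2" "0 \<le> (G * Q + M * G1) / \<delta>" "0 \<le> G1 * Q" "0 \<le> G / a" "0 \<le> M * G2"
    using G G1 G2 M0 Q0 a \<delta>0 by auto
  have Cpos: "C > 0" unfolding C_def using Ct by linarith
  have "semi_concave F"
  proof (rule semi_concave_from_quadratic[OF Cpos])
    fix x0
    show "\<exists>L. linear L \<and> (\<forall>y. F y \<le> F x0 + L (y - x0) + C * (norm (y - x0))^2)"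
    proof (cases "R0 + \<delta> \<le> norm x0")
      case True
      have Fx0: "F x0 = 0" using F0 True \<delta>0 by simp
      show ?thesis
      proof (intro exI[of _ "\<lambda>_. 0"] conjI allI)
        show "linear (\<lambda>_::'a. 0::real)" by (simp add: linear_zero)
        fix y
        show "F y \<le> F x0 + 0 + C * (norm (y - x0))^2"
        proof (cases "R0 < norm y")
          case True then show ?thesis using F0 Fx0 Cpos by simp
        next
          case False
          have "norm x0 \<le> norm y + norm (y - x0)"
            using norm_triangle_ineq[of y "x0 - y"] by (simp add: norm_minus_commute)
          then have dd: "\<delta> \<le> norm (y - x0)" using False True by simp
          have "F y \<le> G * M" using Fb[of y] by simp
          also have "\<dots> = (G * M / \<delta>^2) * \<delta>^2" using \<delta>0 by simp
          also have "\<dots> \<le> (G * M / \<delta>^2) * (norm (y - x0))^2"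
            using dd \<delta>0 G M0 by (intro mult_left_mono power_mono) auto
          also have "\<dots> \<le> C * (norm (y - x0))^2"
          proof (rule mult_right_mono)
            have "0 \<le> (G * Q + M * G1) / \<delta> + G1 * Q + G / a + M * G2 + 1"
              using G G1 G2 M0 Q0 a \<delta>0 by simp
            moreover have "G * M / \<delta>^2 \<le> 3 * G * M / \<delta>^2" using G M0 by (simp add: divide_right_mono)
            ultimately show "G * M / \<delta>^2 \<le> C" by (simp add: C_def)
          qed simp
          finally show ?thesis using Fx0 by simp
        qed
      qed
    next
      case False
      then have x0n: "norm x0 < R0 + \<delta>" by simp
      then have x0c: "x0 \<in> cball 0 R2" using \<delta>0 by (simp add: R2_def)
      have x0b: "x0 \<in> ball 0 1" using x0c R2 by simp
      obtain q where q: "norm q \<le> Q" "\<forall>y\<in>ball 0 1. u y \<le> u x0 + q \<bullet> (y - x0) + (norm (y - x0))^2 / a"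
        using usup[OF x0n] by blast
      define L where "L = (\<lambda>h. g x0 * (q \<bullet> h) + u x0 * blinfun_apply (g' x0) h)"
      have linL: "linear L" unfolding L_def
        by (intro linearI) (simp_all add: inner_add_right blinfun.add_right blinfun.scaleR_right algebra_simps)
      have gx0: "\<bar>g x0\<bar> \<le> G" using G x0c by auto
      have ux0: "\<bar>u x0\<bar> \<le> M" using Mabs x0b by auto
      have qd: "\<bar>q \<bullet> d\<bar> \<le> Q * norm d" for d
        using Cauchy_Schwarz_ineq2[of q d] q mult_right_mono[OF q(1) norm_ge_zero[of d]] by linarith
      have gd: "\<bar>g' x0 d\<bar> \<le> G1 * norm d" for d
        using norm_blinfun[of "g' x0" d] mult_right_mono[of "norm (g' x0)" G1 "norm d"] G1 x0c by auto
      have Lb: "\<bar>L d\<bar> \<le> (G * Q + M * G1) * norm d" for d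
      proof -
        have "\<bar>g x0 * (q \<bullet> d)\<bar> \<le> G * (Q * norm d)"
          unfolding abs_mult using gx0 qd[of d] by (intro mult_mono) auto
        moreover have "\<bar>u x0 * g' x0 d\<bar> \<le> M * (G1 * norm d)"
          unfolding abs_mult using ux0 gd[of d] M0 by (intro mult_mono) auto
        ultimately show ?thesis unfolding L_def by (simp add: algebra_simps)
      qed
      show ?thesis
      proof (intro exI[of _ L] conjI linL allI)
        fix y
        define d where "d = y - x0"
        have nd0: "norm d \<ge> 0" by simp
        show "F y \<le> F x0 + L (y - x0) + C * (norm (y - x0))^2"
        proof (cases "\<delta> \<le> norm d")
          case True
          have "F y - F x0 - L d \<le> 2 * (G * M) + (G * Q + M * G1) * norm d"
            using Fb[of y] Fb[of x0] Lb[of d] by linarith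
          also have "\<dots> \<le> (2 * G * M / \<delta>^2) * (norm d)^2 + ((G * Q + M * G1) / \<delta>) * (norm d)^2"
          proof (rule add_mono)
            have "2 * (G * M) = (2 * G * M / \<delta>^2) * \<delta>^2" using \<delta>0 by simp
            also have "\<dots> \<le> (2 * G * M / \<delta>^2) * (norm d)^2"
              using True \<delta>0 G M0 by (intro mult_left_mono power_mono) auto
            finally show "2 * (G * M) \<le> (2 * G * M / \<delta>^2) * (norm d)^2" .
            have "norm d = (norm d * \<delta>) / \<delta>" using \<delta>0 by simp
            also have "\<dots> \<le> (norm d * norm d) / \<delta>"
              using True \<delta>0 by (intro divide_right_mono mult_left_mono) auto
            finally have "norm d \<le> (norm d)^2 / \<delta>" by (simp add: power2_eq_square)
            then have "(G * Q + M * G1) * norm d \<le> (G * Q + M * G1) * ((norm d)^2 / \<delta>)"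
              using G G1 M0 Q0 by (intro mult_left_mono) auto
            then show "(G * Q + M * G1) * norm d \<le> ((G * Q + M * G1) / \<delta>) * (norm d)^2" by simp
          qed
          also have "\<dots> \<le> C * (norm d)^2"
          proof -
            have "2 * G * M / \<delta>^2 + (G * Q + M * G1) / \<delta> \<le> C"
            proof -
              have "2 * G * M / \<delta>^2 \<le> 3 * G * M / \<delta>^2" using G M0 by (simp add: divide_right_mono)
              moreover have "0 \<le> G1 * Q + G / a + M * G2 + 1" using G G1 G2 M0 Q0 a by simp
              ultimately show ?thesis by (simp add: C_def)
            qed
            from mult_right_mono[OF this zero_le_power2[of "norm d"]] show ?thesis by (simp add: distrib_right)
          qed
          finally show ?thesis by (simp add: d_def)
        next
          case False
          have yx: "norm y \<le> norm x0 + norm d"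
            using norm_triangle_ineq[of x0 d] by (simp add: d_def)
          then have yc: "y \<in> cball 0 R2" using False x0n by (simp add: R2_def)
          have yb: "y \<in> ball 0 1" using yc R2 by simp
          have gy0: "g y \<ge> 0" using g_nonneg yb by auto
          have "norm (g y) \<le> G" using G(2) yc by blast
          then have gy: "g y \<le> G" by simp
          have uy: "u y \<le> u x0 + q \<bullet> d + (norm d)^2 / a" using q yb by (simp add: d_def)
          define E1 where "E1 = (g y - g x0) * (q \<bullet> d)"
          define E2 where "E2 = u x0 * (g y - g x0 - g' x0 d)"
          define E3 where "E3 = g y * ((norm d)^2 / a)"
          have E1: "E1 \<le> G1 * Q * (norm d)^2"
          proof -
            have "\<bar>E1\<bar> \<le> (G1 * norm d) * (Q * norm d)"
              unfolding E1_def abs_mult using glip[OF x0c yc] qd[of d] G1 Q0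
              by (intro mult_mono) (auto simp: d_def)
            then show ?thesis by (simp add: power2_eq_square algebra_simps)
          qed
          have E2: "E2 \<le> M * G2 * (norm d)^2"
          proof -
            have "\<bar>E2\<bar> \<le> M * (G2 * (norm d)^2)"
              unfolding E2_def abs_mult using taylor[OF x0c yc] ux0 M0
              by (intro mult_mono) (auto simp: d_def)
            then show ?thesis by (simp add: algebra_simps)
          qed
          have E3: "E3 \<le> G / a * (norm d)^2"
          proof -
            have "E3 \<le> G * ((norm d)^2 / a)" unfolding E3_def using gy a by (intro mult_right_mono) auto
            then show ?thesis by simp
          qed
          have "F y = g y * u y" using yb by (simp add: F_def)
          also have "\<dots> \<le> g y * (u x0 + q \<bullet> d + (norm d)^2 / a)" by (rule mult_left_mono[OF uy gy0])
          also have "\<dots> = F x0 + L d + E1 + E2 + E3"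
            using x0b by (simp add: F_def L_def E1_def E2_def E3_def algebra_simps)
          also have "\<dots> \<le> F x0 + L d + (G1 * Q + M * G2 + G / a) * (norm d)^2"
            using E1 E2 E3 by (simp add: algebra_simps)
          also have "\<dots> \<le> F x0 + L d + C * (norm d)^2"
          proof -
            have "G1 * Q + M * G2 + G / a \<le> C"
              using G G1 G2 M0 Q0 a \<delta>0 by (simp add: C_def)
            then show ?thesis by (simp add: mult_right_mono)
          qed
          finally show ?thesis by (simp add: d_def)
        qed
      qed
    qed
  qed
  then show ?thesis by (simp add: F_def)
qed

end
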